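(* Let $\mathbf{A}\in\mathbb{R}^{m\times n}$ with $\|\mathbf{A}\|_\infty\le1$, $b\in\mathbb{R}^n$, $c\in\mathbb{R}^m$, $\mu>0$, $\epsilon\in[0,2]$ and $\tau>0$. Let $S_\tau=\{i\in[m]: c_i\ge\min_{i'\in[m]}c_{i'}+\tau\}$ and $\mathcal{X}'=\{x\in\Delta^m: x_i=0\text{ for all }i\in S_\tau\}$. Then $$\min_{x\in\mathcal{X}'}\max_{y\in[0,1]^n}f_{\mu,\epsilon}(x,y)\le\min_{x\in\Delta^m}\max_{y\in[0,1]^n}f_{\mu,\epsilon}(x,y)+\mu m\exp\Big(-\frac{\tau-3}{\mu}\Big).$$
   Context: $f_{\mu,\epsilon}(x,y)=x^\top\mathbf{A}y+c^\top x-b^\top y+\mu\sum_i x_i\log x_i-\frac\epsilon2 x^\top|\mathbf{A}|(y\circ y)$ on $\Delta^m\times[0,1]^n$, with $0\log0=0$; $|\mathbf{A}|$ is entrywise absolute value, $y\circ y$ entrywise square, $\|\mathbf{A}\|_\infty=\max_i\sum_j|\mathbf{A}_{ij}|$, $\Delta^m$ the probability simplex. *)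

theory Defs
  imports "HOL-Analysis.Analysis"
begin

text \<open>Indices: rows range over a finite type 'm (so m = CARD('m)), columns over 'n.\<close>

definition xlogx :: "real \<Rightarrow> real" where
  "xlogx t = (if t = 0 then 0 else t * ln t)"

definition prob_simplex :: "('m::finite \<Rightarrow> real) set" where
  "prob_simplex = {x. (\<forall>i. 0 \<le> x i) \<and> (\<Sum>i\<in>UNIV. x i) = 1}"

definition unit_cube :: "('n::finite \<Rightarrow> real) set" where
  "unit_cube = {y. \<forall>j. 0 \<le> y j \<and> y j \<le> 1}"

definition f_mu_eps ::
  "('m::finite \<Rightarrow> 'n::finite \<Rightarrow> real) \<Rightarrow> ('n \<Rightarrow> real) \<Rightarrow> ('m \<Rightarrow> real) \<Rightarrow> real \<Rightarrow> real
     \<Rightarrow> ('m \<Rightarrow> real) \<Rightarrow> ('n \<Rightarrow> real) \<Rightarrow> real" where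
  "f_mu_eps A b c \<mu> \<epsilon> x y =
     (\<Sum>i\<in>UNIV. \<Sum>j\<in>UNIV. x i * A i j * y j)
     + (\<Sum>i\<in>UNIV. c i * x i) - (\<Sum>j\<in>UNIV. b j * y j)
     + \<mu> * (\<Sum>i\<in>UNIV. xlogx (x i))
     - \<epsilon> / 2 * (\<Sum>i\<in>UNIV. \<Sum>j\<in>UNIV. x i * \<bar>A i j\<bar> * (y j)\<^sup>2)"

definition inf_norm :: "('m::finite \<Rightarrow> 'n::finite \<Rightarrow> real) \<Rightarrow> real" where
  "inf_norm A = Max (range (\<lambda>i. \<Sum>j\<in>UNIV. \<bar>A i j\<bar>))"

definition S_tau :: "('m::finite \<Rightarrow> real) \<Rightarrow> real \<Rightarrow> 'm set" where
  "S_tau c \<tau> = {i. c i \<ge> Min (range c) + \<tau>}"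

definition X_restr :: "('m::finite \<Rightarrow> real) \<Rightarrow> real \<Rightarrow> ('m \<Rightarrow> real) set" where
  "X_restr c \<tau> = {x \<in> prob_simplex. \<forall>i \<in> S_tau c \<tau>. x i = 0}"

end

theory Submission imports Defs begin

definition gfun :: "('m::finite \<Rightarrow> 'n::finite \<Rightarrow> real) \<Rightarrow> ('m \<Rightarrow> real) \<Rightarrow> real \<Rightarrow> 'm \<Rightarrow> ('n \<Rightarrow> real) \<Rightarrow> real" where
  "gfun A c \<epsilon> i y = (\<Sum>j\<in>UNIV. A i j * y j) + c i - \<epsilon>/2 * (\<Sum>j\<in>UNIV. \<bar>A i j\<bar> * (y j)\<^sup>2)"

lemma f_eq: "f_mu_eps A b c \<mu> \<epsilon> x y = (\<Sum>i\<in>UNIV. x i * gfun A c \<epsilon> i y) - (\<Sum>j\<in>UNIV. b j * y j) + \<mu> * (\<Sum>i\<in>UNIV. xlogx (x i))"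
proof -
  have "(\<Sum>i\<in>UNIV. x i * gfun A c \<epsilon> i y) = (\<Sum>i\<in>UNIV. \<Sum>j\<in>UNIV. x i * A i j * y j) + (\<Sum>i\<in>UNIV. c i * x i) - \<epsilon>/2 * (\<Sum>i\<in>UNIV. \<Sum>j\<in>UNIV. x i * \<bar>A i j\<bar> * (y j)\<^sup>2)"
    by (simp add: gfun_def algebra_simps sum.distrib sum_subtractf sum_distrib_left)
  then show ?thesis by (simp add: f_mu_eps_def)
qed

lemma xlogx_ge: "0 \<le> t \<Longrightarrow> xlogx t \<ge> -1"
proof (cases "t = 0")
  case False
  assume "0 \<le> t" then have t: "t > 0" using False by simp
  have "ln (1/t) \<le> 1/t - 1" using t by (intro ln_le_minus_one) simp
  then have "- ln t \<le> 1/t - 1" using t by (simp add: ln_div)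
  then have "t * (- ln t) \<le> t * (1/t - 1)" using t by (intro mult_left_mono) auto
  then have "- (t * ln t) \<le> 1 - t" using t by (simp add: algebra_simps)
  then show ?thesis using t False by (simp add: xlogx_def)
qed (simp add: xlogx_def)

lemma xlogx_inc: assumes "0 \<le> a" "0 \<le> d" "a + d \<le> 1" shows "xlogx (a + d) - xlogx a \<le> d"
proof (cases "a = 0")
  case True
  then show ?thesis using assms
    using ln_le_minus_one[of d] by (cases "d = 0") (auto simp: xlogx_def)
next
  case False
  then have a: "a > 0" using assms by simp
  define s where "s = a + d"
  have s: "s > 0" "s \<le> 1" "a \<le> s" using a assms by (auto simp: s_def)
  have "ln (s/a) \<le> s/a - 1" using a s by (intro ln_le_minus_one) simp
  then have "a * ln (s/a) \<le> a * (s/a - 1)" using a by (intro mult_left_mono) auto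
  then have "a * (ln s - ln a) \<le> s - a" using a s by (simp add: ln_div algebra_simps)
  moreover have "ln s \<le> 0" using s by simp
  moreover have "d * ln s \<le> 0" using \<open>ln s \<le> 0\<close> assms by (simp add: mult_nonneg_nonpos)
  ultimately have "s * ln s - a * ln a \<le> d" unfolding s_def by (simp add: algebra_simps)
  then show ?thesis using a s by (simp add: xlogx_def s_def)
qed

lemma xlogx_key: assumes "0 \<le> t" shows "t * (1 - K) - xlogx t \<le> exp (- K)"
proof (cases "t = 0")
  case False
  then have t: "t > 0" using assms by simp
  define u where "u = t * exp K"
  have u: "u > 0" using t by (simp add: u_def)
  have lt: "ln t = ln u - K" using t by (simp add: u_def ln_mult)
  have "ln (1/u) \<le> 1/u - 1" using u by (intro ln_le_minus_one) simp
  then have "- ln u \<le> 1/u - 1" using u by (simp add: ln_div)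
  then have "u * (- ln u) \<le> u * (1/u - 1)" using u by (intro mult_left_mono) auto
  then have h: "u * (1 - ln u) \<le> 1" using u by (simp add: algebra_simps)
  have "t * (1 - K) - xlogx t = t * (1 - ln u)" using t False by (simp add: xlogx_def lt algebra_simps)
  also have "\<dots> = exp (-K) * (u * (1 - ln u))" by (simp add: u_def exp_minus field_simps)
  also have "\<dots> \<le> exp (-K) * 1" using h by (intro mult_left_mono) auto
  finally show ?thesis by simp
qed (simp add: xlogx_def)

theorem mainTheorem8:
  fixes A :: "'m::finite \<Rightarrow> 'n::finite \<Rightarrow> real" and b :: "'n \<Rightarrow> real" and c :: "'m \<Rightarrow> real"
    and \<mu> \<epsilon> \<tau> :: real
  assumes "inf_norm A \<le> 1" and "\<mu> > 0" and "0 \<le> \<epsilon>" and "\<epsilon> \<le> 2" and "\<tau> > 0"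
  shows "(INF x\<in>X_restr c \<tau>. SUP y\<in>unit_cube. f_mu_eps A b c \<mu> \<epsilon> x y)
         \<le> (INF x\<in>prob_simplex. SUP y\<in>unit_cube. f_mu_eps A b c \<mu> \<epsilon> x y)
            + \<mu> * real CARD('m) * exp (- (\<tau> - 3) / \<mu>)"
proof -
  note assms(1) [simp del]
  define phi where "phi x = (SUP y\<in>unit_cube. f_mu_eps A b c \<mu> \<epsilon> x y)" for x
  define E where "E = \<mu> * real CARD('m) * exp (- (\<tau> - 3) / \<mu>)"
  define S where "S = S_tau c \<tau>"
  define g where "g = gfun A c \<epsilon>"
  have rows: "(\<Sum>j\<in>UNIV. \<bar>A i j\<bar>) \<le> 1" for i
  proof -
    have "(\<Sum>j\<in>UNIV. \<bar>A i j\<bar>) \<le> inf_norm A" unfolding inf_norm_def by (rule Max_ge) auto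
    then show ?thesis using assms(1) by simp
  qed
  have gb: "g i y \<le> c i + 1 \<and> c i - 2 \<le> g i y" if y: "y \<in> unit_cube" for i and y :: "'n \<Rightarrow> real"
  proof -
    have y01: "0 \<le> y j" "y j \<le> 1" for j using y by (auto simp: unit_cube_def)
    have "\<bar>\<Sum>j\<in>UNIV. A i j * y j\<bar> \<le> (\<Sum>j\<in>UNIV. \<bar>A i j * y j\<bar>)" by (rule sum_abs)
    also have "\<dots> \<le> (\<Sum>j\<in>UNIV. \<bar>A i j\<bar>)"
      using y01 by (intro sum_mono) (auto simp: abs_mult intro: mult_left_le)
    also have "\<dots> \<le> 1" by (rule rows)
    finally have h1: "\<bar>\<Sum>j\<in>UNIV. A i j * y j\<bar> \<le> 1" .
    have h2: "0 \<le> (\<Sum>j\<in>UNIV. \<bar>A i j\<bar> * (y j)\<^sup>2)" by (intro sum_nonneg) auto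
    have "(\<Sum>j\<in>UNIV. \<bar>A i j\<bar> * (y j)\<^sup>2) \<le> (\<Sum>j\<in>UNIV. \<bar>A i j\<bar>)"
      using y01 by (intro sum_mono mult_left_le) (auto simp: power_le_one)
    then have h3: "(\<Sum>j\<in>UNIV. \<bar>A i j\<bar> * (y j)\<^sup>2) \<le> 1" using rows[of i] by linarith
    have "0 \<le> \<epsilon>/2 * (\<Sum>j\<in>UNIV. \<bar>A i j\<bar> * (y j)\<^sup>2)" using h2 assms by simp
    moreover have "\<epsilon>/2 * (\<Sum>j\<in>UNIV. \<bar>A i j\<bar> * (y j)\<^sup>2) \<le> 1 * 1"
      using h2 h3 assms by (intro mult_mono) auto
    ultimately show ?thesis using h1 by (simp add: g_def gfun_def abs_le_iff)
  qed
  have cube0: "(\<lambda>_. 0::real) \<in> (unit_cube :: ('n \<Rightarrow> real) set)" by (simp add: unit_cube_def)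
  have bdd: "bdd_above (f_mu_eps A b c \<mu> \<epsilon> x ` unit_cube)" if x: "x \<in> prob_simplex" for x
  proof (rule bdd_aboveI2)
    fix y :: "'n \<Rightarrow> real" assume y: "y \<in> unit_cube"
    have x0: "0 \<le> x i" for i using x by (auto simp: prob_simplex_def)
    have "(\<Sum>i\<in>UNIV. x i * g i y) \<le> (\<Sum>i\<in>UNIV. x i * (c i + 1))"
      using gb[OF y] x0 by (intro sum_mono mult_left_mono) auto
    moreover have "- (\<Sum>j\<in>UNIV. b j * y j) \<le> (\<Sum>j\<in>UNIV. \<bar>b j\<bar>)"
    proof -
      have "- (\<Sum>j\<in>UNIV. b j * y j) = (\<Sum>j\<in>UNIV. - (b j * y j))" by (simp add: sum_negf)
      also have "\<dots> \<le> (\<Sum>j\<in>UNIV. \<bar>b j\<bar>)"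
      proof (intro sum_mono)
        fix j
        have "\<bar>b j * y j\<bar> \<le> \<bar>b j\<bar>" using y by (auto simp: unit_cube_def abs_mult intro: mult_left_le)
        then show "- (b j * y j) \<le> \<bar>b j\<bar>" by linarith
      qed
      finally show ?thesis .
    qed
    ultimately show "f_mu_eps A b c \<mu> \<epsilon> x y \<le> (\<Sum>i\<in>UNIV. x i * (c i + 1)) + (\<Sum>j\<in>UNIV. \<bar>b j\<bar>) + \<mu> * (\<Sum>i\<in>UNIV. xlogx (x i))"
      by (simp add: f_eq g_def)
  qed
  obtain i0 where i0: "c i0 = Min (range c)"
  proof -
    have "Min (range c) \<in> range c" by (rule Min_in) auto
    then show ?thesis using that by (metis imageE)
  qed
  have ci0: "c i0 \<le> c i" for i unfolding i0 by (rule Min_le) auto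
  have i0S: "i0 \<notin> S" using assms(5) i0 by (simp add: S_def S_tau_def)
  have Sge: "c i \<ge> c i0 + \<tau>" if "i \<in> S" for i using that i0 by (simp add: S_def S_tau_def)
  have lower: "phi x \<ge> c i0 - 2 - \<mu> * real CARD('m)" if x: "x \<in> prob_simplex" for x
  proof -
    have x0: "0 \<le> x i" for i using x by (auto simp: prob_simplex_def)
    have xs: "(\<Sum>i\<in>UNIV. x i) = 1" using x by (auto simp: prob_simplex_def)
    have "(\<Sum>i\<in>UNIV. x i * (c i0 - 2)) \<le> (\<Sum>i\<in>UNIV. x i * g i (\<lambda>_. 0))"
    proof (intro sum_mono mult_left_mono)
      fix i show "c i0 - 2 \<le> g i (\<lambda>_. 0)" using gb[OF cube0, of i] ci0[of i] by linarith
    qed (use x0 in auto)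
    moreover have "(\<Sum>i\<in>UNIV. x i * (c i0 - 2)) = c i0 - 2" using xs by (simp add: sum_distrib_right[symmetric])
    moreover have "(\<Sum>i\<in>(UNIV::'m set). (-1::real)) \<le> (\<Sum>i\<in>UNIV. xlogx (x i))"
      using x0 by (intro sum_mono) (simp add: xlogx_ge)
    then have "- real CARD('m) \<le> (\<Sum>i\<in>UNIV. xlogx (x i))" by simp
    then have "\<mu> * (- real CARD('m)) \<le> \<mu> * (\<Sum>i\<in>UNIV. xlogx (x i))" using assms(2) by (intro mult_left_mono) auto
    ultimately have "c i0 - 2 - \<mu> * real CARD('m) \<le> f_mu_eps A b c \<mu> \<epsilon> x (\<lambda>_. 0)"
      by (simp add: f_eq g_def)
    also have "\<dots> \<le> phi x" unfolding phi_def by (rule cSUP_upper[OF cube0 bdd[OF x]])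
    finally show ?thesis .
  qed
  have step: "\<exists>x'\<in>X_restr c \<tau>. phi x' \<le> phi x + E" if x: "x \<in> prob_simplex" for x
  proof -
    have x0: "0 \<le> x i" for i using x by (auto simp: prob_simplex_def)
    have xs: "(\<Sum>i\<in>UNIV. x i) = 1" using x by (auto simp: prob_simplex_def)
    define d where "d = (\<Sum>i\<in>S. x i)"
    define x' where "x' i = x i - (if i \<in> S then x i else 0) + (if i = i0 then d else 0)" for i
    have d0: "0 \<le> d" unfolding d_def using x0 by (intro sum_nonneg) auto
    have sumS: "(\<Sum>i\<in>UNIV. if i \<in> S then h i else 0) = (\<Sum>i\<in>S. h i)" for h :: "'m \<Rightarrow> real"
      by (simp add: sum.inter_restrict[symmetric])
    have x'S: "x' i = 0" if "i \<in> S" for i using that i0S by (auto simp: x'_def)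
    have x'0: "0 \<le> x' i" for i using x0 d0 by (auto simp: x'_def)
    have "(\<Sum>i\<in>UNIV. x' i) = (\<Sum>i\<in>UNIV. x i) - (\<Sum>i\<in>UNIV. if i \<in> S then x i else 0) + (\<Sum>i\<in>UNIV. if i = i0 then d else 0)"
      unfolding x'_def by (simp add: sum.distrib sum_subtractf)
    also have "\<dots> = 1" using xs by (simp add: sumS d_def)
    finally have x'sum: "(\<Sum>i\<in>UNIV. x' i) = 1" .
    have x'X: "x' \<in> X_restr c \<tau>" using x'S x'0 x'sum
      by (simp add: X_restr_def prob_simplex_def S_def)
    have xd1: "x i0 + d \<le> 1"
    proof -
      have "x i0 + d = (\<Sum>i\<in>insert i0 S. x i)" using i0S by (simp add: d_def)
      also have "\<dots> \<le> (\<Sum>i\<in>UNIV. x i)" using x0 by (intro sum_mono2) auto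
      finally show ?thesis using xs by simp
    qed
    define K where "K = (\<tau> - 3) / \<mu>"
    have fle: "f_mu_eps A b c \<mu> \<epsilon> x' y \<le> f_mu_eps A b c \<mu> \<epsilon> x y + E" if y: "y \<in> unit_cube" for y
    proof -
      have "(\<Sum>i\<in>UNIV. x' i * g i y) = (\<Sum>i\<in>UNIV. x i * g i y) - (\<Sum>i\<in>UNIV. if i \<in> S then x i * g i y else 0) + (\<Sum>i\<in>UNIV. if i = i0 then d * g i0 y else 0)"
      proof -
        have "x' i * g i y = x i * g i y - (if i \<in> S then x i * g i y else 0) + (if i = i0 then d * g i0 y else 0)" for i
          by (auto simp: x'_def algebra_simps)
        then show ?thesis by (simp add: sum.distrib sum_subtractf)
      qed
      also have "\<dots> = (\<Sum>i\<in>UNIV. x i * g i y) + (\<Sum>i\<in>S. x i * (g i0 y - g i y))"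
        by (simp add: sumS d_def sum_distrib_right sum_subtractf algebra_simps)
      also have "(\<Sum>i\<in>S. x i * (g i0 y - g i y)) \<le> (\<Sum>i\<in>S. x i * (3 - \<tau>))"
      proof (intro sum_mono mult_left_mono)
        fix i assume "i \<in> S"
        then show "g i0 y - g i y \<le> 3 - \<tau>" using gb[OF y, of i] gb[OF y, of i0] Sge[of i] by linarith
      qed (use x0 in auto)
      finally have lin: "(\<Sum>i\<in>UNIV. x' i * g i y) \<le> (\<Sum>i\<in>UNIV. x i * g i y) + (\<Sum>i\<in>S. x i * (3 - \<tau>))" by simp
      have pw: "xlogx (x' i) = xlogx (x i) - (if i \<in> S then xlogx (x i) else 0) + (if i = i0 then xlogx (x i0 + d) - xlogx (x i0) else 0)" for i
        using i0S by (auto simp: x'_def xlogx_def)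
      have "(\<Sum>i\<in>UNIV. xlogx (x' i)) = (\<Sum>i\<in>UNIV. xlogx (x i)) - (\<Sum>i\<in>S. xlogx (x i)) + (xlogx (x i0 + d) - xlogx (x i0))"
        unfolding pw by (simp add: sum.distrib sum_subtractf sumS)
      also have "\<dots> \<le> (\<Sum>i\<in>UNIV. xlogx (x i)) - (\<Sum>i\<in>S. xlogx (x i)) + d"
        using xlogx_inc[OF x0 d0 xd1] by simp
      finally have ent: "\<mu> * (\<Sum>i\<in>UNIV. xlogx (x' i)) \<le> \<mu> * ((\<Sum>i\<in>UNIV. xlogx (x i)) - (\<Sum>i\<in>S. xlogx (x i)) + d)"
        using assms(2) by (intro mult_left_mono) auto
      have "f_mu_eps A b c \<mu> \<epsilon> x' y \<le> f_mu_eps A b c \<mu> \<epsilon> x y + (\<Sum>i\<in>S. x i * (3 - \<tau>) + \<mu> * x i - \<mu> * xlogx (x i))"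
        using lin ent by (simp add: f_eq g_def d_def sum.distrib sum_subtractf sum_distrib_left algebra_simps)
      also have "(\<Sum>i\<in>S. x i * (3 - \<tau>) + \<mu> * x i - \<mu> * xlogx (x i)) \<le> (\<Sum>i\<in>S. \<mu> * exp (- K))"
      proof (intro sum_mono)
        fix i
        have "\<mu> * (x i * (1 - K) - xlogx (x i)) \<le> \<mu> * exp (- K)"
          using xlogx_key[OF x0, of i K] assms(2) by (intro mult_left_mono) auto
        moreover have "\<mu> * (x i * (1 - K)) = x i * (3 - \<tau>) + \<mu> * x i"
          using assms(2) by (simp add: K_def field_simps)
        ultimately show "x i * (3 - \<tau>) + \<mu> * x i - \<mu> * xlogx (x i) \<le> \<mu> * exp (- K)"
          by (simp add: algebra_simps)
      qed
      also have "\<dots> = real (card S) * (\<mu> * exp (- K))" by simp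
      also have "\<dots> \<le> real CARD('m) * (\<mu> * exp (- K))"
        using assms(2) by (intro mult_right_mono) (auto simp: card_mono)
      also have "\<dots> = E" by (simp add: E_def K_def minus_divide_left)
      finally show ?thesis by simp
    qed
    have "phi x' \<le> phi x + E" unfolding phi_def
    proof (rule cSUP_least)
      show "(unit_cube :: ('n \<Rightarrow> real) set) \<noteq> {}" by (metis cube0 empty_iff)
      fix y :: "'n \<Rightarrow> real" assume y: "y \<in> unit_cube"
      have "f_mu_eps A b c \<mu> \<epsilon> x y \<le> (SUP y\<in>unit_cube. f_mu_eps A b c \<mu> \<epsilon> x y)"
        by (rule cSUP_upper[OF y bdd[OF x]])
      then show "f_mu_eps A b c \<mu> \<epsilon> x' y \<le> (SUP y\<in>unit_cube. f_mu_eps A b c \<mu> \<epsilon> x y) + E"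
        using fle[OF y] by linarith
    qed
    then show ?thesis using x'X by blast
  qed
  have Xsub: "X_restr c \<tau> \<subseteq> prob_simplex" by (auto simp: X_restr_def)
  have bddX: "bdd_below (phi ` X_restr c \<tau>)"
    by (rule bdd_belowI2[of _ "c i0 - 2 - \<mu> * real CARD('m)"]) (use lower Xsub in auto)
  have e0: "(\<lambda>i. if i = i0 then 1 else 0::real) \<in> prob_simplex" by (simp add: prob_simplex_def)
  have "(INF x\<in>X_restr c \<tau>. phi x) - E \<le> (INF x\<in>prob_simplex. phi x)"
  proof (rule cINF_greatest)
    show "(prob_simplex :: ('m \<Rightarrow> real) set) \<noteq> {}" by (metis e0 empty_iff)
    fix x :: "'m \<Rightarrow> real" assume x: "x \<in> prob_simplex"
    obtain x' where x': "x' \<in> X_restr c \<tau>" "phi x' \<le> phi x + E" using step[OF x] by blast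
    have "(INF x\<in>X_restr c \<tau>. phi x) \<le> phi x'" by (rule cINF_lower[OF bddX x'(1)])
    then show "(INF x\<in>X_restr c \<tau>. phi x) - E \<le> phi x" using x'(2) by linarith
  qed
  then show ?thesis by (simp add: phi_def E_def)
qed

end
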